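(* Let $\mathcal{T}$ be the law with tail function $\overline{F}(t)=e^{-t}$ for $t\in[0,1)\cup(2,\infty)$ and $\overline{F}(t)=e^{-2}$ for $t\in[1,2]$. Then $\overline{F}(u)\overline{F}(1)\leq\overline{F}(1+u)$ for all $u\in[0,\infty)$, yet for every $\epsilon\in(0,\tfrac12)$, with $r=\tfrac12+\epsilon$, one has $\mathcal{T}^{\delta_r}((1,\infty])>\mathcal{T}((1,\infty])$.
   Context: For a probability law $\mathcal{T}$ on $[0,\infty]$ and $r\in(0,\infty)$: let $(T_k)_{k\in\mathbb{N}}$ be i.i.d. with law $\mathcal{T}$; $\mathcal{T}^{\delta_r}$ is the law of the random time $\tilde T$ defined a.s. by $\tilde T=(k-1)r+T_k$ on $\{T_1>r,\ldots,T_{k-1}>r,T_k\leq r\}$, $k\in\mathbb{N}$ (deterministic reset with period $r$). The tail function is $\overline{F}(t)=\mathcal{T}((t,\infty])$. *)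

theory Defs
  imports "HOL-Probability.Probability"
begin

text \<open>Laws on [0,\<infinity>] are modelled as probability measures on the Borel sets of ennreal.
  The tail function of a law M is t \<mapsto> measure M {ennreal t<..} (the set (t,\<infinity>]).\<close>

definition tail :: "ennreal measure \<Rightarrow> real \<Rightarrow> real" where
  "tail M t = measure M {ennreal t<..}"

text \<open>Deterministic reset with period r applied to the i.i.d. sequence \<omega> (0-indexed):
  if \<omega> 0, ..., \<omega> (k-1) > r and \<omega> k \<le> r then the reset time is k*r + \<omega> k.
  On the (null) event that no \<omega> k is \<le> r the value is \<infinity> (arbitrary).\<close>

definition reset_time :: "real \<Rightarrow> (nat \<Rightarrow> ennreal) \<Rightarrow> ennreal" where
  "reset_time r \<omega> =
     (if \<exists>k. \<omega> k \<le> ennreal r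
      then (let k = (LEAST k. \<omega> k \<le> ennreal r) in ennreal (real k * r) + \<omega> k)
      else \<infinity>)"

definition reset_law :: "ennreal measure \<Rightarrow> real \<Rightarrow> ennreal measure" where
  "reset_law M r = distr (PiM UNIV (\<lambda>_::nat. M)) borel (reset_time r)"

definition example_tail :: "real \<Rightarrow> real" where
  "example_tail t = (if 1 \<le> t \<and> t \<le> 2 then exp (-2) else exp (-t))"

end

theory Submission
  imports Defs
begin

lemma meas_reset:
  assumes "sets M = sets borel"
  shows "reset_time r \<in> borel_measurable (PiM UNIV (\<lambda>_::nat. M))"
proof -
  have c: "(\<lambda>\<omega>. \<omega> k) \<in> borel_measurable (PiM UNIV (\<lambda>_::nat. M))" for k
  proof -
    have "(\<lambda>\<omega>. \<omega> k) \<in> measurable (PiM UNIV (\<lambda>_::nat. M)) M" by (rule measurable_component_singleton) simp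
    then show ?thesis using measurable_cong_sets[OF refl assms] by metis
  qed
  define P where "P = PiM UNIV (\<lambda>_::nat. M)"
  have c': "(\<lambda>\<omega>. \<omega> k) \<in> borel_measurable P" for k using c P_def by simp
  have p: "Measurable.pred P (\<lambda>\<omega>. \<omega> k \<le> ennreal r)" for k
    using c' by measurable
  have l: "(\<lambda>\<omega>. LEAST k. \<omega> k \<le> ennreal r) \<in> measurable P (count_space UNIV)"
    by (rule measurable_Least) (rule p)
  have e: "Measurable.pred P (\<lambda>\<omega>. \<exists>k. \<omega> k \<le> ennreal r)"
    by (rule pred_intros_countable) (rule p)
  have f: "(\<lambda>\<omega>. ennreal (real k * r) + \<omega> k) \<in> borel_measurable P" for k
    using c' by measurable
  have "reset_time r \<in> borel_measurable P" unfolding reset_time_def Let_def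
    apply (rule measurable_If[OF _ _ e[unfolded pred_def]])
     apply (rule measurable_compose_countable[OF f l])
    by simp
  then show ?thesis using P_def by simp
qed

lemma part1:
  fixes u :: real assumes "u \<ge> 0"
  shows "example_tail u * example_tail 1 \<le> example_tail (1 + u)"
proof -
  have e1: "example_tail 1 = exp (-2)" by (simp add: example_tail_def)
  have b: "example_tail u \<le> 1" using assms by (auto simp: example_tail_def)
  show ?thesis
  proof (cases "u \<le> 1")
    case True
    then have "example_tail (1+u) = exp (-2)" using assms by (simp add: example_tail_def)
    then show ?thesis using e1 b by (simp add: mult_left_le_one_le)
  next
    case False
    then have a: "example_tail (1+u) = exp (-1-u)" by (simp add: example_tail_def)
    show ?thesis
    proof (cases "u \<le> 2")
      case True
      then have "example_tail u = exp(-2)" using False by (simp add: example_tail_def)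
      then have "example_tail u * example_tail 1 = exp(-4)" using e1 by (simp add: mult_exp_exp)
      then show ?thesis using a True by simp
    next
      case F2: False
      then have "example_tail u = exp(-u)" using False by (simp add: example_tail_def)
      then have "example_tail u * example_tail 1 = exp(-u-2)" using e1 by (simp add: mult_exp_exp)
      then show ?thesis using a by simp
    qed
  qed
qed

lemma subset_reset:
  fixes r :: real assumes "1/2 < r" "r < 1" "x 0 > ennreal r" "x 1 > ennreal (1 - r)"
  shows "reset_time r x > ennreal 1"
proof (cases "\<exists>k. x k \<le> ennreal r")
  case True
  define k where "k = (LEAST k. x k \<le> ennreal r)"
  have xk: "x k \<le> ennreal r" unfolding k_def using True by (metis LeastI)
  have eq: "reset_time r x = ennreal (real k * r) + x k"
    using True by (simp add: reset_time_def k_def Let_def)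
  have k0: "k \<noteq> 0" using xk assms(3) by (metis not_le)
  show ?thesis
  proof (cases "k = 1")
    case True
    with xk obtain y where y: "x 1 = ennreal y" "y \<ge> 0"
      by (metis ennreal_cases ennreal_less_top infinity_ennreal_def top.not_eq_extremum top_unique)
    have "y > 1 - r" using assms(4) y assms(2) by (simp add: ennreal_less_iff)
    then have "ennreal 1 < ennreal (r + y)" using assms by (subst ennreal_less_iff) auto
    also have "\<dots> = ennreal r + x 1" using y assms by (simp add: ennreal_plus)
    finally show ?thesis using eq True by simp
  next
    case False
    then have "k \<ge> 2" using k0 by simp
    then have "real k * r \<ge> 2 * r" using assms by (intro mult_right_mono) auto
    then have "1 < real k * r" using assms(1) by linarith
    then have "ennreal 1 < ennreal (real k * r)" using assms by (subst ennreal_less_iff) auto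
    also have "\<dots> \<le> ennreal (real k * r) + x k" by simp
    finally show ?thesis using eq by simp
  qed
next
  case False
  then show ?thesis by (simp add: reset_time_def)
qed

theorem mainTheorem11:
  fixes M :: "ennreal measure"
  assumes "prob_space M"
    and "sets M = sets borel"
    and "\<And>t::real. t \<ge> 0 \<Longrightarrow> tail M t = example_tail t"
  shows "(\<forall>u::real. u \<ge> 0 \<longrightarrow> tail M u * tail M 1 \<le> tail M (1 + u))
    \<and> (\<forall>\<epsilon>::real. 0 < \<epsilon> \<and> \<epsilon> < 1/2 \<longrightarrow>
         tail (reset_law M (1/2 + \<epsilon>)) 1 > tail M 1)"
proof (intro conjI allI impI)
  fix u :: real assume "u \<ge> 0"
  then show "tail M u * tail M 1 \<le> tail M (1 + u)" using assms(3) part1 by simp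
next
  fix \<epsilon> :: real assume h: "0 < \<epsilon> \<and> \<epsilon> < 1/2"
  define r where "r = 1/2 + \<epsilon>"
  have r: "1/2 < r" "r < 1" using h r_def by auto
  define P where "P = PiM UNIV (\<lambda>_::nat. M)"
  interpret product_prob_space "\<lambda>_::nat. M" UNIV
    by (simp add: product_prob_space_def product_prob_space_axioms_def product_sigma_finite_def
        assms(1) prob_space_imp_sigma_finite)
  interpret PP: prob_space P unfolding P_def by (rule P.prob_space_axioms)
  define X where "X = (\<lambda>i::nat. if i = 0 then {ennreal r<..} else {ennreal (1-r)<..})"
  have Xs: "X i \<in> sets M" for i unfolding X_def using assms(2) by auto
  define S where "S = {x\<in>space P. \<forall>i\<in>{0,1}. x i \<in> X i}"
  have "emeasure P S = (\<Prod>i\<in>{0::nat,1}. emeasure M (X i))"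
    unfolding S_def P_def by (rule emeasure_PiM_Collect) (auto simp: Xs)
  also have "\<dots> = ennreal (tail M r) * ennreal (tail M (1-r))"
    by (simp add: X_def tail_def finite_measure.emeasure_eq_measure[OF prob_space.finite_measure[OF assms(1)]])
  also have "\<dots> = ennreal (exp (-1))"
    using r assms(3)[of r] assms(3)[of "1-r"]
    by (simp add: example_tail_def ennreal_mult'[symmetric] mult_exp_exp)
  finally have mS: "measure P S = exp (-1)"
    by (simp add: PP.emeasure_eq_measure)
  have meas: "reset_time r \<in> borel_measurable P" unfolding P_def by (rule meas_reset[OF assms(2)])
  have "tail (reset_law M r) 1 = measure P (reset_time r -` {ennreal 1<..} \<inter> space P)"
    unfolding tail_def reset_law_def P_def[symmetric]
    by (rule measure_distr[OF meas]) auto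
  also have "\<dots> \<ge> measure P S"
  proof (rule PP.finite_measure_mono)
    show "S \<subseteq> reset_time r -` {ennreal 1<..} \<inter> space P"
      unfolding S_def X_def using subset_reset[OF r] by auto
    show "reset_time r -` {ennreal 1<..} \<inter> space P \<in> sets P"
      using meas by measurable
  qed
  finally have "tail (reset_law M r) 1 \<ge> exp (-1)" using mS by simp
  moreover have "tail M 1 = exp (-2)" using assms(3)[of 1] by (simp add: example_tail_def)
  moreover have "exp (-2::real) < exp (-1)" by simp
  ultimately show "tail (reset_law M (1/2 + \<epsilon>)) 1 > tail M 1" unfolding r_def[symmetric] by linarith
qed
end
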